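(* Let $S$ and $T$ be primitive strings, each of length at least $2$, over a totally ordered alphabet. Let $U$ be the LMS-prefix of $S$ (i.e. of $\mathrm{conj}_1(S)$) and $V$ the LMS-prefix of $T$. If $U<_{LMS}V$, then $S\prec_\omega T$.
   Context: For $T=T[1..n]$, $\mathrm{conj}_i(T)=T[i..n]T[1..i-1]$; strings are viewed cyclically. For a primitive string $T$ of length $\ge2$, position $i$ is of type S if $\mathrm{conj}_i(T)<_{\mathrm{lex}}\mathrm{conj}_{i+1}(T)$ and of type L if $\mathrm{conj}_i(T)>_{\mathrm{lex}}\mathrm{conj}_{i+1}(T)$; an S-type position $i$ is LMS if $i-1$ (cyclically) is L-type. The LMS-prefix of $\mathrm{conj}_i(T)$ is the cyclic substring from position $i$ to the first LMS position strictly after $i$ (cyclically, wrapping around if needed). LMS-order: $U<_{LMS}V$ if $V$ is a proper prefix of $U$, or neither is a prefix of the other and $U<_{\mathrm{lex}}V$. The $\omega$-order: $S\prec_\omega T$ if either $\mathrm{root}(S)=\mathrm{root}(T)$ and $\exp(S)<\exp(T)$, or $S^\omega<_{\mathrm{lex}}T^\omega$, where $X^\omega$ is the infinite concatenation of copies of $X$ and $X=\mathrm{root}(X)^{\exp(X)}$ with $\mathrm{root}(X)$ primitive. *)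

theory Defs
  imports Main "HOL-Library.Sublist"
begin

(* Strings are lists over a linear order; positions are 0-indexed internally:
   paper position i (1-indexed) corresponds to index i-1 here, and
   conj_i(T) = T[i..n]T[1..i-1] is  rotate (i-1) T. *)

definition conj :: "nat \<Rightarrow> 'a list \<Rightarrow> 'a list" where
  "conj i w = rotate i w"

definition primitive :: "'a list \<Rightarrow> bool" where
  "primitive w \<longleftrightarrow> w \<noteq> [] \<and> (\<forall>r k. w = concat (replicate k r) \<longrightarrow> k = 1)"

abbreviation lex_less :: "'a::linorder list \<Rightarrow> 'a list \<Rightarrow> bool" where
  "lex_less u v \<equiv> ord_class.lexordp u v"

definition S_type :: "'a::linorder list \<Rightarrow> nat \<Rightarrow> bool" where
  "S_type w i \<longleftrightarrow> lex_less (conj i w) (conj (Suc i) w)"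

definition L_type :: "'a::linorder list \<Rightarrow> nat \<Rightarrow> bool" where
  "L_type w i \<longleftrightarrow> lex_less (conj (Suc i) w) (conj i w)"

(* i < length w; predecessor taken cyclically *)
definition is_LMS :: "'a::linorder list \<Rightarrow> nat \<Rightarrow> bool" where
  "is_LMS w i \<longleftrightarrow> S_type w i \<and> L_type w ((i + length w - 1) mod length w)"

(* cyclic substring from index i to the first LMS index strictly after i
   (cyclically, possibly wrapping all the way round back to i) *)
definition lms_prefix :: "'a::linorder list \<Rightarrow> nat \<Rightarrow> 'a list" where
  "lms_prefix w i =
     (let j = (LEAST j. i < j \<and> j \<le> i + length w \<and> is_LMS w (j mod length w))
      in take (j - i + 1) (conj i w @ conj i w))"

definition lms_less :: "'a::linorder list \<Rightarrow> 'a list \<Rightarrow> bool" where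
  "lms_less u v \<longleftrightarrow> strict_prefix v u \<or> (\<not> prefix u v \<and> \<not> prefix v u \<and> lex_less u v)"

definition root :: "'a list \<Rightarrow> 'a list" where
  "root x = (THE r. primitive r \<and> (\<exists>k. x = concat (replicate k r)))"

definition expo :: "'a list \<Rightarrow> nat" where
  "expo x = length x div length (root x)"

definition omega :: "'a list \<Rightarrow> nat \<Rightarrow> 'a" where
  "omega x n = x ! (n mod length x)"

definition inf_lex_less :: "(nat \<Rightarrow> 'a::linorder) \<Rightarrow> (nat \<Rightarrow> 'a) \<Rightarrow> bool" where
  "inf_lex_less x y \<longleftrightarrow> (\<exists>k. (\<forall>i<k. x i = y i) \<and> x k < y k)"

definition omega_less :: "'a::linorder list \<Rightarrow> 'a list \<Rightarrow> bool" where
  "omega_less s t \<longleftrightarrow> (root s = root t \<and> expo s < expo t) \<or> inf_lex_less (omega s) (omega t)"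

end

theory Submission
  imports Defs
begin

lemma lex_nth:
  "lex_less (a::'a::linorder list) b \<longleftrightarrow> (length a < length b \<and> take (length a) b = a) \<or>
     (\<exists>i<min (length a) (length b). (\<forall>t<i. a!t = b!t) \<and> a!i < b!i)"
proof -
  have e: "take i a = take i b \<longleftrightarrow> (\<forall>t<i. a!t = b!t)" if "i < min (length a) (length b)" for i
    using that by (auto simp: list_eq_iff_nth_eq)
  show ?thesis unfolding lexordp_conv_lexord lexord_take_index_conv using e by auto
qed

lemma length_conj[simp]: "length (conj i w) = length w" by (simp add: conj_def)

lemma conj_nth: "k < length w \<Longrightarrow> conj i w ! k = omega w (i+k)"
  by (simp add: conj_def nth_rotate omega_def)

lemma S_type_iff: "S_type w i \<longleftrightarrow> (\<exists>k<length w. (\<forall>t<k. omega w (i+t) = omega w (Suc i+t)) \<and> omega w (i+k) < omega w (Suc i+k))"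
proof -
  have e: "(\<forall>t<k. conj i w ! t = conj (Suc i) w ! t) = (\<forall>t<k. omega w (i+t) = omega w (Suc i+t))" if "k<length w" for k
    using that by (auto simp: conj_nth)
  show ?thesis unfolding S_type_def lex_nth using e by (auto simp: conj_nth)
qed

lemma L_type_iff: "L_type w i \<longleftrightarrow> (\<exists>k<length w. (\<forall>t<k. omega w (i+t) = omega w (Suc i+t)) \<and> omega w (Suc i+k) < omega w (i+k))"
proof -
  have e: "(\<forall>t<k. conj i w ! t = conj (Suc i) w ! t) = (\<forall>t<k. omega w (i+t) = omega w (Suc i+t))" if "k<length w" for k
    using that by (auto simp: conj_nth)
  show ?thesis unfolding L_type_def lex_nth using e by (auto simp: conj_nth)
qed

lemma omega_mod: "a mod length w = b mod length w \<Longrightarrow> omega w (a + t) = omega w (b + t)"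
  unfolding omega_def by (metis mod_add_left_eq)

lemma S_type_mod: "a mod length w = b mod length w \<Longrightarrow> S_type w a = S_type w b"
proof -
  assume a: "a mod length w = b mod length w"
  have 1: "omega w (a+t) = omega w (b+t)" for t using omega_mod[OF a] .
  have 2: "omega w (Suc a+t) = omega w (Suc b+t)" for t using omega_mod[OF a, of "Suc t"] by simp
  show ?thesis unfolding S_type_iff 1 2 ..
qed

lemma L_type_mod: "a mod length w = b mod length w \<Longrightarrow> L_type w a = L_type w b"
proof -
  assume a: "a mod length w = b mod length w"
  have 1: "omega w (a+t) = omega w (b+t)" for t using omega_mod[OF a] .
  have 2: "omega w (Suc a+t) = omega w (Suc b+t)" for t using omega_mod[OF a, of "Suc t"] by simp
  show ?thesis unfolding L_type_iff 1 2 ..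
qed

lemma rot_fix: "rotate 1 w = w \<Longrightarrow> rotate k w = w"
  by (induct k) auto

lemma concat_rep: "concat (replicate n [a]) = replicate n a"
  by (induct n) auto

lemma rotate_inj: "rotate i x = rotate i y \<Longrightarrow> x = y"
  by (induct i) (auto dest: injD[OF inj_rotate1])

lemma dichot:
  assumes "primitive w" "length w \<ge> 2"
  shows "S_type w i \<or> L_type w i"
proof (rule ccontr)
  assume "\<not> ?thesis"
  then have "conj i w = conj (Suc i) w" unfolding S_type_def L_type_def
    using lexordp_linear by blast
  then have "rotate i (rotate 1 w) = rotate i w" by (simp add: conj_def rotate1_rotate_swap)
  then have r1: "rotate 1 w = w" by (rule rotate_inj)
  have all: "w ! k = w ! 0" if "k < length w" for k
  proof -
    have "w ! k = rotate k w ! 0" using that by (subst nth_rotate) auto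
    also have "... = w ! 0" using rot_fix[OF r1] by simp
    finally show ?thesis .
  qed
  have "w = replicate (length w) (w ! 0)"
    by (rule nth_equalityI) (simp_all add: all)
  then have "w = concat (replicate (length w) [w!0])" by (metis concat_rep)
  then have "length w = 1" using assms(1) unfolding primitive_def by blast
  then show False using assms(2) by simp
qed


lemma conj_len: "conj (length w) w = conj 0 w"
  unfolding conj_def by (subst rotate_conv_mod) simp

lemma chainL: "(\<forall>i. lex_less (conj (Suc i) w) (conj i w)) \<Longrightarrow> 1 \<le> k \<Longrightarrow> lex_less (conj k w) (conj 0 w)"
proof (induct k)
  case 0 then show ?case by simp
next
  case (Suc k) then show ?case
    by (cases k) (auto intro: lexordp_trans)
qed

lemma chainS: "(\<forall>i. lex_less (conj i w) (conj (Suc i) w)) \<Longrightarrow> 1 \<le> k \<Longrightarrow> lex_less (conj 0 w) (conj k w)"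
proof (induct k)
  case 0 then show ?case by simp
next
  case (Suc k) then show ?case
    by (cases k) (auto intro: lexordp_trans)
qed

lemma exS:
  assumes "primitive w" "length w \<ge> 2"
  shows "\<exists>i. S_type w i"
proof (rule ccontr)
  assume "\<not> ?thesis"
  then have "\<forall>i. lex_less (conj (Suc i) w) (conj i w)"
    using dichot[OF assms] unfolding L_type_def by blast
  from chainL[OF this, of "length w"] assms(2) show False
    by (simp add: conj_len lexordp_irreflexive')
qed

lemma exL:
  assumes "primitive w" "length w \<ge> 2"
  shows "\<exists>i. L_type w i"
proof (rule ccontr)
  assume "\<not> ?thesis"
  then have "\<forall>i. lex_less (conj i w) (conj (Suc i) w)"
    using dichot[OF assms] unfolding S_type_def by blast
  from chainS[OF this, of "length w"] assms(2) show False
    by (simp add: conj_len lexordp_irreflexive')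
qed

lemma mod_pred: "0 < q \<Longrightarrow> 0 < (n::nat) \<Longrightarrow> (q mod n + n - 1) mod n = (q - 1) mod n"
proof -
  assume "0 < q" "0 < n"
  then obtain r where r: "q = Suc r" by (cases q) auto
  show ?thesis
  proof (cases "Suc (r mod n) = n")
    case True
    then have "r mod n = n - 1" by simp
    then show ?thesis using True r by (simp add: mod_Suc)
  next
    case False
    then show ?thesis using r \<open>0 < n\<close> by (simp add: mod_Suc)
  qed
qed

lemma exLMS:
  assumes "primitive w" "length w \<ge> 2"
  shows "\<exists>j. 0 < j \<and> j \<le> length w \<and> is_LMS w (j mod length w)"
proof -
  let ?n = "length w"
  obtain p where p: "L_type w p" using exL[OF assms] by blast
  obtain s where s: "S_type w s" using exS[OF assms] by blast
  let ?s = "s + ?n * Suc p"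
  have "?s mod ?n = s mod ?n" by (rule mod_mult_self2)
  then have "S_type w ?s" using s S_type_mod[of ?s w s] by blast
  moreover have "p < ?s"
  proof -
    have "1 * Suc p \<le> ?n * Suc p" using assms(2) by (intro mult_le_mono1) (cases w, auto)
    then show ?thesis by simp
  qed
  ultimately have ex: "\<exists>q. p < q \<and> S_type w q" by blast
  define q where "q = (LEAST q. p < q \<and> S_type w q)"
  have q: "p < q" "S_type w q" using LeastI_ex[OF ex] unfolding q_def by auto
  have Lq: "L_type w (q - 1)"
  proof (cases "q - 1 = p")
    case True then show ?thesis using p by simp
  next
    case False
    then have "p < q - 1" "q - 1 < q" using q by auto
    then have "\<not> S_type w (q - 1)" using not_less_Least[of "q - 1" "\<lambda>q. p < q \<and> S_type w q"]
      unfolding q_def by blast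
    then show ?thesis using dichot[OF assms] by blast
  qed
  define j where "j = (if q mod ?n = 0 then ?n else q mod ?n)"
  have n0: "0 < ?n" using assms(2) by linarith
  have jm: "j mod ?n = q mod ?n" unfolding j_def by simp
  have "0 < j" "j \<le> ?n" unfolding j_def using n0 by auto
  moreover have "S_type w (j mod ?n)" using q(2) S_type_mod[of "j mod ?n" w q] jm by simp
  moreover have "L_type w ((j mod ?n + ?n - 1) mod ?n)"
    using Lq L_type_mod[of "(j mod ?n + ?n - 1) mod ?n" w "q - 1"] jm mod_pred[of q ?n] q(1) n0
    by simp
  ultimately show ?thesis unfolding is_LMS_def by blast
qed


lemma run_const: "(\<forall>t<k. f (j+t) = f (Suc j+t)) \<Longrightarrow> t \<le> k \<Longrightarrow> f (j+t) = f j"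
  by (induct t) auto

lemma core:
  fixes x y :: "nat \<Rightarrow> 'a::linorder"
  assumes agree: "\<forall>t\<le>Suc i. x t = y t"
  and TL: "(\<forall>t<k. y(i+t) = y(Suc i+t)) \<and> y(Suc i+k) < y(i+k)"
  and TS: "(\<forall>t<k'. y(Suc i+t) = y(Suc (Suc i)+t)) \<and> y(Suc i+k') < y(Suc (Suc i)+k')"
  and N: "0 < N"
  and SL: "(\<exists>k<N. (\<forall>t<k. x(i+t) = x(Suc i+t)) \<and> x(Suc i+k) < x(i+k)) \<Longrightarrow>
     (\<exists>k. (\<forall>t<k. x(Suc i+t) = x(Suc (Suc i)+t)) \<and> x(Suc (Suc i)+k) < x(Suc i+k))"
  shows "inf_lex_less x y"
proof -
  have "k = 0"
  proof (rule ccontr)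
    assume "k \<noteq> 0"
    then obtain k1 where k1: "k = Suc k1" by (cases k) auto
    have sh: "\<forall>t<k1. y(Suc i+t) = y(Suc (Suc i)+t)"
    proof (intro allI impI)
      fix t assume "t < k1"
      then have "Suc t < k" using k1 by simp
      then have "y(i+Suc t) = y(Suc i+Suc t)" using TL by blast
      then show "y(Suc i+t) = y(Suc (Suc i)+t)" by simp
    qed
    have dec: "y(Suc (Suc i)+k1) < y(Suc i+k1)" using TL k1 by simp
    show False
    proof (cases "k1 < k'")
      case True
      then have "y(Suc i+k1) = y(Suc (Suc i)+k1)" using TS by blast
      then show ?thesis using dec by simp
    next
      case False
      show ?thesis
      proof (cases "k1 = k'")
        case True
        then have "y(Suc i+k1) < y(Suc (Suc i)+k1)" using TS by blast
        then show ?thesis using dec by simp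
      next
        case False
        then have "k' < k1" using \<open>\<not> k1 < k'\<close> by simp
        then have "y(Suc i+k') = y(Suc (Suc i)+k')" using sh by blast
        then show ?thesis using TS by simp
      qed
    qed
  qed
  then have "y(Suc i) < y i" using TL by simp
  then have "x(Suc i) < x i" using agree by simp
  then have "\<exists>k<N. (\<forall>t<k. x(i+t) = x(Suc i+t)) \<and> x(Suc i+k) < x(i+k)"
    using N by (intro exI[of _ 0]) simp
  then obtain m where m: "\<forall>t<m. x(Suc i+t) = x(Suc (Suc i)+t)" "x(Suc (Suc i)+m) < x(Suc i+m)"
    using SL by blast
  have xc: "x (Suc i + t) = x (Suc i)" if "t \<le> m" for t using run_const[of m x "Suc i" t] m(1) that by simp
  have yc: "y (Suc i + t) = y (Suc i)" if "t \<le> k'" for t using run_const[of k' y "Suc i" t] TS that by simp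
  have a0: "x (Suc i) = y (Suc i)" using agree by simp
  define p where "p = Suc (Suc i) + min m k'"
  have before: "x t = y t" if "t < p" for t
  proof (cases "t \<le> Suc i")
    case True then show ?thesis using agree by simp
  next
    case False
    define d where "d = t - Suc i"
    have d: "t = Suc i + d" "d \<le> min m k'" using that False unfolding p_def d_def by auto
    then show ?thesis using xc yc a0 by simp
  qed
  have at: "x p < y p"
  proof (cases "m < k'")
    case True
    then have "x p < x (Suc i)" using m(2) xc[of m] unfolding p_def by simp
    moreover have "y p = y (Suc i)" using yc[of "Suc m"] True unfolding p_def by simp
    ultimately show ?thesis using a0 by simp
  next
    case False
    show ?thesis
    proof (cases "m = k'")
      case True
      then have "x p < x (Suc i)" using m(2) xc[of m] unfolding p_def by simp
      moreover have "y (Suc i) < y p" using TS yc[of k'] True unfolding p_def by simp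
      ultimately show ?thesis using a0 by simp
    next
      case False
      then have "k' < m" using \<open>\<not> m < k'\<close> by simp
      then have "x p = x (Suc i)" using xc[of "Suc k'"] unfolding p_def by simp
      moreover have "y (Suc i) < y p" using TS yc[of k'] \<open>k' < m\<close> unfolding p_def by simp
      ultimately show ?thesis using a0 by simp
    qed
  qed
  show ?thesis unfolding inf_lex_less_def using before at by blast
qed


lemma take_nth_omega: "k < m \<Longrightarrow> k < 2 * length w \<Longrightarrow> take m (w @ w) ! k = omega w k"
proof -
  assume a: "k < m" "k < 2 * length w"
  have "take m (w @ w) ! k = (w @ w) ! k" using a(1) by (rule nth_take)
  also have "... = omega w k"
  proof (cases "k < length w")
    case True then show ?thesis unfolding omega_def by (simp add: nth_append)
  next
    case False
    have "k - length w < length w" using a(2) False by simp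
    then have "k mod length w = k - length w" using False by (simp add: le_mod_geq)
    then show ?thesis using False unfolding omega_def by (simp add: nth_append)
  qed
  finally show ?thesis .
qed

lemma lms_prefix0: "lms_prefix w 0 = take (Suc (LEAST j. 0 < j \<and> j \<le> length w \<and> is_LMS w (j mod length w))) (w @ w)"
  unfolding lms_prefix_def Let_def conj_def rotate0 id_apply add_0 diff_zero Suc_eq_plus1 ..

theorem lemma5:
  fixes S T :: "'a::linorder list"
  assumes "primitive S" and "primitive T"
    and "length S \<ge> 2" and "length T \<ge> 2"
    and "lms_less (lms_prefix S 0) (lms_prefix T 0)"
  shows "omega_less S T"
proof -
  define jS where "jS = (LEAST j. 0 < j \<and> j \<le> length S \<and> is_LMS S (j mod length S))"
  define jT where "jT = (LEAST j. 0 < j \<and> j \<le> length T \<and> is_LMS T (j mod length T))"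
  define U where "U = lms_prefix S 0"
  define V where "V = lms_prefix T 0"
  have U: "U = take (Suc jS) (S @ S)" unfolding U_def jS_def lms_prefix0 ..
  have V: "V = take (Suc jT) (T @ T)" unfolding V_def jT_def lms_prefix0 ..
  have hS: "0 < jS \<and> jS \<le> length S \<and> is_LMS S (jS mod length S)"
    unfolding jS_def by (rule LeastI_ex[OF exLMS[OF assms(1,3)]])
  have hT: "0 < jT \<and> jT \<le> length T \<and> is_LMS T (jT mod length T)"
    unfolding jT_def by (rule LeastI_ex[OF exLMS[OF assms(2,4)]])
  have lU: "length U = Suc jS" using hS unfolding U by (auto simp: min_def)
  have lV: "length V = Suc jT" using hT unfolding V by (auto simp: min_def)
  have Ux: "U ! k = omega S k" if "k < length U" for k
    using that lU hS assms(3) unfolding U by (intro take_nth_omega) auto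
  have Vy: "V ! k = omega T k" if "k < length V" for k
    using that lV hT assms(4) unfolding V by (intro take_nth_omega) auto
  have L: "lms_less U V" using assms(5) unfolding U_def V_def .
  show ?thesis
  proof (cases "strict_prefix V U")
    case False
    then have np: "\<not> prefix U V" "\<not> prefix V U" "lex_less U V" using L unfolding lms_less_def by auto
    have "\<not> (length U < length V \<and> take (length U) V = U)" using np(1)
      by (metis take_is_prefix)
    then obtain i where i: "i < min (length U) (length V)" "\<forall>t<i. U!t = V!t" "U!i < V!i"
      using np(3) unfolding lex_nth by blast
    have "inf_lex_less (omega S) (omega T)" unfolding inf_lex_less_def
      using i Ux Vy by (intro exI[of _ i]) auto
    then show ?thesis unfolding omega_less_def by blast
  next
    case True
    then obtain z where z: "U = V @ z" "z \<noteq> []" by (auto simp: strict_prefix_def prefix_def)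
    then have "length V < length U" by simp
    then have jlt: "jT < jS" using lU lV by simp
    have agree: "\<forall>t\<le>jT. omega S t = omega T t"
    proof (intro allI impI)
      fix t assume "t \<le> jT"
      then have "t < length V" using lV by simp
      then show "omega S t = omega T t" using Ux Vy z \<open>length V < length U\<close>
        by (metis nth_append order.strict_trans)
    qed
    obtain i where i: "jT = Suc i" using hT by (cases jT) auto
    have nS: "\<not> is_LMS S (jT mod length S)"
      using not_less_Least[of jT "\<lambda>j. 0 < j \<and> j \<le> length S \<and> is_LMS S (j mod length S)"]
        jlt hS hT unfolding jS_def by auto
    have nS0: "0 < length S" using assms(3) by linarith
    have nT0: "0 < length T" using assms(4) by linarith
    have pS: "(jT mod length S + length S - 1) mod length S = i mod length S"
      using mod_pred[OF _ nS0, of jT] i by simp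
    have pT: "(jT mod length T + length T - 1) mod length T = i mod length T"
      using mod_pred[OF _ nT0, of jT] i by simp
    have nS': "\<not> (S_type S jT \<and> L_type S i)"
      using nS pS S_type_mod[of "jT mod length S" S jT] L_type_mod[of "i mod length S" S i]
      unfolding is_LMS_def by simp
    have TS: "S_type T jT" and TL: "L_type T i"
      using hT pT S_type_mod[of "jT mod length T" T jT] L_type_mod[of "i mod length T" T i]
      unfolding is_LMS_def by auto
    obtain k where k: "(\<forall>t<k. omega T (i+t) = omega T (Suc i+t)) \<and> omega T (Suc i+k) < omega T (i+k)"
      using TL unfolding L_type_iff by blast
    obtain k' where k': "(\<forall>t<k'. omega T (Suc i+t) = omega T (Suc (Suc i)+t)) \<and> omega T (Suc i+k') < omega T (Suc (Suc i)+k')"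
      using TS unfolding S_type_iff i by blast
    have SL: "(\<exists>k. (\<forall>t<k. omega S (Suc i+t) = omega S (Suc (Suc i)+t)) \<and> omega S (Suc (Suc i)+k) < omega S (Suc i+k))"
      if "(\<exists>k<length S. (\<forall>t<k. omega S (i+t) = omega S (Suc i+t)) \<and> omega S (Suc i+k) < omega S (i+k))"
    proof -
      have "L_type S i" using that unfolding L_type_iff .
      then have "\<not> S_type S jT" using nS' by blast
      then have "L_type S (Suc i)" using dichot[OF assms(1,3)] i by blast
      then show ?thesis unfolding L_type_iff by blast
    qed
    have ag: "\<forall>t\<le>Suc i. omega S t = omega T t" using agree i by simp
    have "inf_lex_less (omega S) (omega T)"
      by (rule core[OF ag k k' nS0 SL])
    then show ?thesis unfolding omega_less_def by blast
  qed
qed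

end
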